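(* Let $(\mathsf{M},g)$ be either an $n$-dimensional smooth closed Riemannian manifold or $(\mathbb{R}^n,g_n)$, and let $w\in BC^r(\mathsf{M})$ with $r\in(0,1]$; if $\mathsf{M}=\mathbb{R}^n$ assume moreover there is a constant $w_\infty>0$ such that $\|w-w_\infty\|_{L_\infty(\mathbb{R}^n\setminus\mathbb{B}(0,\widetilde R))}\to0$ as $\widetilde R\to\infty$. Let $\widetilde\omega:\mathbb{R}\to[0,1]$ be smooth, nonincreasing, equal to $1$ on $[0,1/2]$ and $0$ on $[3/4,\infty)$. For $R>0$ and points $\mathsf p_j\in\mathsf{M}$ define $$w_{j,R}(\mathsf p)=\widetilde\omega\Big(\tfrac{d(\mathsf p,\mathsf p_j)}{2R}\Big)w(\mathsf p)+\Big(1-\widetilde\omega\Big(\tfrac{d(\mathsf p,\mathsf p_j)}{2R}\Big)\Big)w(\mathsf p_j),$$ and, when $\mathsf{M}=\mathbb{R}^n$, for $\widetilde R>0$, $$w_{0,\widetilde R}(\mathsf p)=\Big(1-\widetilde\omega\Big(\tfrac{d(\mathsf p,0)}{2\widetilde R}\Big)\Big)w(\mathsf p)+\widetilde\omega\Big(\tfrac{d(\mathsf p,0)}{2\widetilde R}\Big)w_\infty.$$ Then for any $\alpha\in[0,r)$ and $\varepsilon>0$ there exists $R_0>0$ such that for every $R\in(0,R_0)$ and every finite family of points $\mathsf p_1,\dots,\mathsf p_N\in\mathsf{M}$ (in particular the centers of a finite cover of $\mathsf{M}$, resp. of $\overline{\mathbb{B}(0,\widetilde R)}$, by geodesic balls of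 radius $R$) one has $\|w_{j,R}-w(\mathsf p_j)\|_{\alpha,\infty}<\varepsilon$ for each $j\in\{1,\dots,N\}$. In addition, if $\mathsf{M}=\mathbb{R}^n$, there exists $\widehat R>0$ such that $\|w_{0,\widetilde R}-w_\infty\|_{\alpha,\infty}<\varepsilon$ whenever $\widetilde R>\widehat R$.
   Context: $d$ denotes geodesic distance. For $\alpha\in(0,1)$, $\|u\|_{\alpha,\infty}=\|u\|_\infty+\sup_{\mathsf p\ne\mathsf q}|u(\mathsf p)-u(\mathsf q)|/d(\mathsf p,\mathsf q)^\alpha$ and $BC^\alpha(\mathsf{M})$ is the space where this is finite; $\|u\|_{0,\infty}=\|u\|_\infty$; $BC^1(\mathsf{M})$ consists of bounded $C^1$ functions with bounded gradient. *)

theory Defs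
  imports "HOL-Analysis.Analysis"
begin

definition smooth_real :: "(real \<Rightarrow> real) \<Rightarrow> bool" where
  "smooth_real f \<longleftrightarrow> (\<exists>D :: nat \<Rightarrow> real \<Rightarrow> real. D 0 = f \<and>
      (\<forall>k x. (D k has_real_derivative D (Suc k) x) (at x)))"

definition sup_norm :: "('m \<Rightarrow> real) \<Rightarrow> ereal" where
  "sup_norm u = (SUP p. ereal \<bar>u p\<bar>)"

definition hoelder_seminorm :: "real \<Rightarrow> ('m::metric_space \<Rightarrow> real) \<Rightarrow> ereal" where
  "hoelder_seminorm \<alpha> u =
     Sup ({0} \<union> {ereal (\<bar>u p - u q\<bar> / dist p q powr \<alpha>) | p q. p \<noteq> q})"

definition hoelder_norm :: "real \<Rightarrow> ('m::metric_space \<Rightarrow> real) \<Rightarrow> ereal" where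
  "hoelder_norm \<alpha> u = (if \<alpha> = 0 then sup_norm u else sup_norm u + hoelder_seminorm \<alpha> u)"

definition BC1 :: "('a::real_normed_vector \<Rightarrow> real) \<Rightarrow> bool" where
  "BC1 u \<longleftrightarrow> bounded (range u) \<and>
     (\<exists>u' :: 'a \<Rightarrow> ('a \<Rightarrow>\<^sub>L real). (\<forall>x. (u has_derivative blinfun_apply (u' x)) (at x))
        \<and> continuous_on UNIV u' \<and> bounded (range u'))"

definition BC_eucl :: "real \<Rightarrow> ('a::euclidean_space \<Rightarrow> real) \<Rightarrow> bool" where
  "BC_eucl r u \<longleftrightarrow> (if r < 1 then hoelder_norm r u < \<infinity> else BC1 u)"

definition cutoff_profile :: "(real \<Rightarrow> real) \<Rightarrow> bool" where
  "cutoff_profile \<omega> \<longleftrightarrow> smooth_real \<omega> \<and> (\<forall>t. 0 \<le> \<omega> t \<and> \<omega> t \<le> 1) \<and> antimono \<omega> \<and>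
     (\<forall>t\<in>{0..1/2}. \<omega> t = 1) \<and> (\<forall>t\<ge>3/4. \<omega> t = 0)"

definition w_loc :: "(real \<Rightarrow> real) \<Rightarrow> ('m::metric_space \<Rightarrow> real) \<Rightarrow> real \<Rightarrow> 'm \<Rightarrow> 'm \<Rightarrow> real" where
  "w_loc \<omega> w R pj p = \<omega> (dist p pj / (2 * R)) * w p + (1 - \<omega> (dist p pj / (2 * R))) * w pj"

definition w_far :: "(real \<Rightarrow> real) \<Rightarrow> ('a::real_normed_vector \<Rightarrow> real) \<Rightarrow> real \<Rightarrow> real \<Rightarrow> 'a \<Rightarrow> real" where
  "w_far \<omega> w winf R p = (1 - \<omega> (dist p 0 / (2 * R))) * w p + \<omega> (dist p 0 / (2 * R)) * winf"

end

theory Submission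
  imports Defs
begin


lemma sup_norm_le: assumes "\<And>p. \<bar>u p\<bar> \<le> S" shows "sup_norm u \<le> ereal S"
  unfolding sup_norm_def using assms by (auto intro!: SUP_least)

lemma sup_norm_ge: "ereal \<bar>u p\<bar> \<le> sup_norm u"
  unfolding sup_norm_def by (rule SUP_upper) auto

lemma seminorm_le:
  assumes "K \<ge> 0" "\<And>p q. p \<noteq> q \<Longrightarrow> \<bar>u p - u q\<bar> / dist p q powr \<alpha> \<le> K"
  shows "hoelder_seminorm \<alpha> u \<le> ereal K"
  unfolding hoelder_seminorm_def using assms by (auto intro!: Sup_least)

lemma seminorm_ge0: "0 \<le> hoelder_seminorm \<alpha> u"
  unfolding hoelder_seminorm_def by (rule Sup_upper) auto

lemma seminorm_ge: "p \<noteq> q \<Longrightarrow> ereal (\<bar>u p - u q\<bar> / dist p q powr \<alpha>) \<le> hoelder_seminorm \<alpha> u"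
  unfolding hoelder_seminorm_def by (rule Sup_upper) auto

lemma sup_bound: assumes "sup_norm u < \<infinity>" obtains B where "\<And>p. \<bar>u p\<bar> \<le> B"
proof -
  have "sup_norm u \<noteq> -\<infinity>" using sup_norm_ge[of u undefined] by auto
  then obtain B where "sup_norm u = ereal B" using assms by (cases "sup_norm u") auto
  then show ?thesis using that sup_norm_ge[of u] by force
qed

lemma semi_bound: assumes "hoelder_seminorm \<alpha> u < \<infinity>" "\<alpha> > 0"
  obtains C where "C \<ge> 0" "\<And>p q. \<bar>u p - u q\<bar> \<le> C * dist p q powr \<alpha>"
proof -
  have "hoelder_seminorm \<alpha> u \<noteq> -\<infinity>" using seminorm_ge0[of \<alpha> u] by auto
  then obtain C where C: "hoelder_seminorm \<alpha> u = ereal C" using assms by (cases "hoelder_seminorm \<alpha> u") auto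
  have "C \<ge> 0" using seminorm_ge0[of \<alpha> u] C by auto
  moreover have "\<bar>u p - u q\<bar> \<le> C * dist p q powr \<alpha>" for p q
  proof (cases "p = q")
    case False
    then have "\<bar>u p - u q\<bar> / dist p q powr \<alpha> \<le> C" using seminorm_ge[OF False, of u \<alpha>] C by auto
    moreover have "dist p q powr \<alpha> > 0" using False by auto
    ultimately show ?thesis by (simp add: divide_le_eq)
  qed auto
  ultimately show ?thesis using that by blast
qed

lemma hn_bounds: fixes w :: "'m::metric_space \<Rightarrow> real"
  assumes "hoelder_norm r w < \<infinity>" "r > 0"
  obtains B C where "\<And>p. \<bar>w p\<bar> \<le> B" "C \<ge> 0" "\<And>p q. \<bar>w p - w q\<bar> \<le> C * dist p q powr r"
proof -
  have s: "sup_norm w + hoelder_seminorm r w < \<infinity>" using assms unfolding hoelder_norm_def by auto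
  have a: "sup_norm w \<ge> 0" using sup_norm_ge[of w undefined] by (meson abs_ge_zero ereal_less_eq(5) order_trans)
  have b: "hoelder_seminorm r w \<ge> 0" by (rule seminorm_ge0)
  have "sup_norm w < \<infinity>" "hoelder_seminorm r w < \<infinity>" using s a b
    by (cases "sup_norm w"; cases "hoelder_seminorm r w"; simp)+
  then show ?thesis using that sup_bound semi_bound assms(2) by metis
qed



lemma interp_pt:
  fixes D d S K \<alpha> r :: real
  assumes "0 \<le> \<alpha>" "\<alpha> < r" "0 \<le> D" "D \<le> 2*S" "D \<le> K * d powr r" "d > 0" "K \<ge> 0"
  shows "D \<le> K powr (\<alpha>/r) * (2*S) powr (1 - \<alpha>/r) * d powr \<alpha>"
proof (cases "D = 0")
  case True then show ?thesis using assms by (auto intro!: mult_nonneg_nonneg)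
next
  case False
  define \<theta> where "\<theta> = \<alpha>/r"
  have th: "0 \<le> \<theta>" "\<theta> < 1" using assms by (auto simp: \<theta>_def)
  have "D = D powr \<theta> * D powr (1-\<theta>)" using False assms by (simp add: powr_add[symmetric])
  also have "\<dots> \<le> (K * d powr r) powr \<theta> * (2*S) powr (1-\<theta>)"
    using assms th False by (intro mult_mono powr_mono2) auto
  also have "(K * d powr r) powr \<theta> = K powr \<theta> * d powr \<alpha>"
    using assms by (simp add: powr_mult powr_powr \<theta>_def)
  finally show ?thesis by (simp add: \<theta>_def mult_ac)
qed

lemma interp:
  fixes f :: "'m::metric_space \<Rightarrow> real"
  assumes "0 \<le> \<alpha>" "\<alpha> < r" "S \<ge> 0" "K \<ge> 0" "\<And>p. \<bar>f p\<bar> \<le> S"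
    "\<And>p q. \<bar>f p - f q\<bar> \<le> K * dist p q powr r"
  shows "hoelder_norm \<alpha> f \<le> ereal (S + K powr (\<alpha>/r) * (2*S) powr (1 - \<alpha>/r))"
proof -
  have s: "sup_norm f \<le> ereal S" by (rule sup_norm_le) fact
  have nn: "0 \<le> K powr (\<alpha>/r) * (2*S) powr (1 - \<alpha>/r)" by simp
  show ?thesis
  proof (cases "\<alpha> = 0")
    case True
    have "hoelder_norm \<alpha> f = sup_norm f" using True by (simp add: hoelder_norm_def)
    also have "\<dots> \<le> ereal S" by (rule s)
    also have "\<dots> \<le> ereal (S + K powr (\<alpha>/r) * (2*S) powr (1 - \<alpha>/r))" using nn by simp
    finally show ?thesis .
  next
    case False
    have "hoelder_seminorm \<alpha> f \<le> ereal (K powr (\<alpha>/r) * (2*S) powr (1 - \<alpha>/r))"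
    proof (rule seminorm_le[OF nn])
      fix p q :: 'm assume "p \<noteq> q"
      then have d: "dist p q > 0" by simp
      have "\<bar>f p - f q\<bar> \<le> 2*S" using assms(5)[of p] assms(5)[of q] by linarith
      then have "\<bar>f p - f q\<bar> \<le> K powr (\<alpha>/r) * (2*S) powr (1 - \<alpha>/r) * dist p q powr \<alpha>"
        using interp_pt[OF assms(1,2) _ _ assms(6) d assms(4)] by auto
      then show "\<bar>f p - f q\<bar> / dist p q powr \<alpha> \<le> K powr (\<alpha>/r) * (2*S) powr (1 - \<alpha>/r)"
        using d by (simp add: divide_le_eq)
    qed
    then show ?thesis using s False unfolding hoelder_norm_def
      by (simp add: add_mono flip: plus_ereal.simps)
  qed
qed

lemma small:
  fixes K \<theta> \<epsilon> :: real
  assumes "K \<ge> 0" "0 \<le> \<theta>" "\<theta> < 1" "\<epsilon> > 0"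
  obtains \<eta> where "\<eta> > 0" "\<And>S. 0 \<le> S \<Longrightarrow> S < \<eta> \<Longrightarrow> S + K powr \<theta> * (2*S) powr (1-\<theta>) < \<epsilon>"
proof -
  have e: "\<forall>\<^sub>F S in at_right (0::real). 0 \<le> 2*S"
    using eventually_at_right_less[of "0::real"] by eventually_elim auto
  have t0: "((\<lambda>S::real. 2*S) \<longlongrightarrow> 0) (at_right 0)"
    using tendsto_mult[OF tendsto_const tendsto_ident_at, of "2::real" 0 "{0<..}"] by simp
  have t1: "((\<lambda>S::real. (2*S) powr (1-\<theta>)) \<longlongrightarrow> 0) (at_right 0)"
    by (rule tendsto_zero_powrI[OF t0 tendsto_const e]) (use assms in auto)
  have t2: "((\<lambda>S::real. S) \<longlongrightarrow> 0) (at_right 0)" by (rule tendsto_ident_at)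
  have "((\<lambda>S. S + K powr \<theta> * (2*S) powr (1-\<theta>)) \<longlongrightarrow> 0 + K powr \<theta> * 0) (at_right 0)"
    by (intro tendsto_add t2 tendsto_mult tendsto_const t1)
  then have "eventually (\<lambda>S. S + K powr \<theta> * (2*S) powr (1-\<theta>) < \<epsilon>) (at_right 0)"
    using assms by (auto dest: order_tendstoD(2))
  then obtain b where b: "b > 0" "\<And>S. S > 0 \<Longrightarrow> S < b \<Longrightarrow> S + K powr \<theta> * (2*S) powr (1-\<theta>) < \<epsilon>"
    unfolding eventually_at_right[OF zero_less_one] by auto
  show ?thesis
  proof (rule that[OF b(1)])
    fix S :: real assume "0 \<le> S" "S < b"
    then show "S + K powr \<theta> * (2*S) powr (1-\<theta>) < \<epsilon>"
      using b(2)[of S] assms by (cases "S = 0") auto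
  qed
qed

lemma min_powr: fixes x r :: real assumes "0 \<le> x" "0 < r" "r \<le> 1" shows "min 1 x \<le> x powr r"
proof (cases "x \<le> 1")
  case True
  then have "x powr 1 \<le> x powr r" using assms by (intro powr_mono') auto
  then show ?thesis using assms by simp
next
  case False
  then have "1 \<le> x powr r" using assms by (simp add: ge_one_powr_ge_zero)
  then show ?thesis by simp
qed

lemma omega_lip:
  assumes "cutoff_profile \<omega>"
  obtains L where "L \<ge> 0" "\<And>s t. 0 \<le> s \<Longrightarrow> 0 \<le> t \<Longrightarrow> \<bar>\<omega> s - \<omega> t\<bar> \<le> L * \<bar>s - t\<bar>"
proof -
  from assms obtain D where D: "D 0 = \<omega>" "\<And>k x. (D k has_real_derivative D (Suc k) x) (at x)"
    unfolding cutoff_profile_def smooth_real_def by blast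
  have "continuous_on {0..1} (D 1)"
    using D(2)[of 1] by (auto intro!: continuous_at_imp_continuous_on DERIV_isCont)
  then have "bounded (D 1 ` {0..1})" by (intro compact_imp_bounded compact_continuous_image) auto
  then obtain M where M0: "\<forall>x\<in>{0..1}. norm (D 1 x) \<le> M" unfolding bounded_iff by blast
  then have M: "\<And>x. x \<in> {0..1} \<Longrightarrow> \<bar>D 1 x\<bar> \<le> M" by auto
  have om: "\<And>t. 0 \<le> \<omega> t \<and> \<omega> t \<le> 1" "\<And>t. t \<ge> 3/4 \<Longrightarrow> \<omega> t = 0"
    using assms unfolding cutoff_profile_def by auto
  have mvt: "\<bar>\<omega> s - \<omega> t\<bar> \<le> M * \<bar>s - t\<bar>" if "s \<in> {0..1}" "t \<in> {0..1}" "s < t" for s t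
  proof -
    obtain z where z: "s < z" "z < t" "D 0 t - D 0 s = (t - s) * D 1 z"
      using MVT2[OF \<open>s < t\<close>, of "D 0" "D 1"] D(2)[of 0] by auto
    have "\<bar>D 1 z\<bar> \<le> M" using M z that by auto
    have "\<bar>\<omega> s - \<omega> t\<bar> = \<bar>D 0 t - D 0 s\<bar>" using D(1) by (simp add: abs_minus_commute)
    also have "\<dots> = \<bar>(t - s) * D 1 z\<bar>" using z by simp
    also have "\<dots> = (t - s) * \<bar>D 1 z\<bar>" using that by (simp add: abs_mult)
    also have "\<dots> \<le> (t - s) * M" using \<open>\<bar>D 1 z\<bar> \<le> M\<close> that by (intro mult_left_mono) auto
    finally show ?thesis using that by (simp add: mult.commute)
  qed
  have main: "\<bar>\<omega> s - \<omega> t\<bar> \<le> max M 4 * \<bar>s - t\<bar>" if "0 \<le> s" "s < t" for s t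
  proof (cases "t \<le> 1")
    case True
    then have "\<bar>\<omega> s - \<omega> t\<bar> \<le> M * \<bar>s - t\<bar>" using mvt[of s t] that by auto
    also have "\<dots> \<le> max M 4 * \<bar>s - t\<bar>" by (intro mult_right_mono) auto
    finally show ?thesis .
  next
    case False
    show ?thesis
    proof (cases "s \<ge> 3/4")
      case True then show ?thesis using om(2)[of s] om(2)[of t] False by auto
    next
      case F2: False
      have "\<bar>\<omega> s - \<omega> t\<bar> \<le> 1" using om(1)[of s] om(1)[of t] by auto
      also have "\<dots> \<le> 4 * \<bar>s - t\<bar>" using False F2 by auto
      also have "\<dots> \<le> max M 4 * \<bar>s - t\<bar>" by (intro mult_right_mono) auto
      finally show ?thesis .
    qed
  qed
  show ?thesis
  proof (rule that[of "max M 4"])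
    fix s t :: real assume "0 \<le> s" "0 \<le> t"
    show "\<bar>\<omega> s - \<omega> t\<bar> \<le> max M 4 * \<bar>s - t\<bar>"
    proof (cases "s < t")
      case True then show ?thesis using main[of s t] \<open>0 \<le> s\<close> by blast
    next
      case False
      show ?thesis
      proof (cases "t < s")
        case True
        then have "\<bar>\<omega> t - \<omega> s\<bar> \<le> max M 4 * \<bar>t - s\<bar>" using main[of t s] \<open>0 \<le> t\<close> by blast
        then show ?thesis by (simp only: abs_minus_commute)
      next
        case F2: False
        then have "s = t" using False by simp
        then show ?thesis by simp
      qed
    qed
  next
    show "0 \<le> max M 4" by simp
  qed
qed



lemma loc_part:
  fixes w :: "'m::metric_space \<Rightarrow> real"
  assumes om: "cutoff_profile \<omega>" and r: "0 < r" "r \<le> 1" and hw: "hoelder_norm r w < \<infinity>"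
    and al: "0 \<le> \<alpha>" "\<alpha> < r" and ep: "\<epsilon> > 0"
  shows "\<exists>R0>0. \<forall>R\<in>{0<..<R0}. \<forall>pj::'m. hoelder_norm \<alpha> (\<lambda>p. w_loc \<omega> w R pj p - w pj) < ereal \<epsilon>"
proof -
  obtain B C where C: "C \<ge> 0" "\<And>p q. \<bar>w p - w q\<bar> \<le> C * dist p q powr r"
    using hn_bounds[OF hw r(1)] by metis
  obtain L where L: "L \<ge> 0" "\<And>s t. 0 \<le> s \<Longrightarrow> 0 \<le> t \<Longrightarrow> \<bar>\<omega> s - \<omega> t\<bar> \<le> L * \<bar>s - t\<bar>"
    using omega_lip[OF om] by metis
  have om01: "\<And>t. 0 \<le> \<omega> t \<and> \<omega> t \<le> 1" "\<And>t. t \<ge> 3/4 \<Longrightarrow> \<omega> t = 0"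
    using om unfolding cutoff_profile_def by auto
  define K where "K = C + C * (3*L/4) powr r"
  have K0: "K \<ge> 0" using C by (simp add: K_def)
  obtain \<eta> where eta: "\<eta> > 0" "\<And>S. 0 \<le> S \<Longrightarrow> S < \<eta> \<Longrightarrow> S + K powr (\<alpha>/r) * (2*S) powr (1-\<alpha>/r) < \<epsilon>"
    using small[OF K0 _ _ ep, of "\<alpha>/r"] al r by auto
  have e: "\<forall>\<^sub>F R in at_right (0::real). 0 \<le> 3*R/2"
    using eventually_at_right_less[of "0::real"] by eventually_elim auto
  have t0: "((\<lambda>R::real. 3*R/2) \<longlongrightarrow> 0) (at_right 0)"
    using tendsto_divide[OF tendsto_mult[OF tendsto_const tendsto_ident_at, of "3::real" 0 "{0<..}"] tendsto_const, of 2] by simp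
  have "((\<lambda>R::real. C * (3*R/2) powr r) \<longlongrightarrow> C * 0) (at_right 0)"
    by (intro tendsto_mult tendsto_const tendsto_zero_powrI[OF t0 tendsto_const e]) (use r in auto)
  then have "\<forall>\<^sub>F R in at_right (0::real). C * (3*R/2) powr r < \<eta>"
    using eta by (auto dest: order_tendstoD(2))
  then obtain R0 where R0: "R0 > 0" "\<And>R. R > 0 \<Longrightarrow> R < R0 \<Longrightarrow> C * (3*R/2) powr r < \<eta>"
    unfolding eventually_at_right[OF zero_less_one] by auto
  show ?thesis
  proof (intro exI[of _ R0] conjI R0 ballI allI)
    fix R and pj :: 'm assume "R \<in> {0<..<R0::real}"
    then have R: "R > 0" "R < R0" by auto
    define S where "S = C * (3*R/2) powr r"
    have S: "0 \<le> S" "S < \<eta>" using R0(2)[OF R] C by (auto simp: S_def)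
    define \<phi> where "\<phi> p = \<omega> (dist p pj / (2*R))" for p
    define f where "f p = w_loc \<omega> w R pj p - w pj" for p
    have f: "f p = \<phi> p * (w p - w pj)" for p
      by (simp add: f_def \<phi>_def w_loc_def algebra_simps)
    have phi01: "0 \<le> \<phi> p" "\<phi> p \<le> 1" for p using om01 by (auto simp: \<phi>_def)
    have phi0: "\<phi> p = 0" if "dist p pj \<ge> 3*R/2" for p
      using om01(2)[of "dist p pj / (2*R)"] that R by (auto simp: \<phi>_def field_simps)
    have sup: "\<bar>f p\<bar> \<le> S" for p
    proof (cases "dist p pj < 3*R/2")
      case True
      have "\<bar>f p\<bar> \<le> \<bar>w p - w pj\<bar>" using phi01[of p] by (auto simp: f abs_mult intro: mult_left_le_one_le)
      also have "\<dots> \<le> C * dist p pj powr r" by (rule C)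
      also have "\<dots> \<le> S" unfolding S_def using True C r by (intro mult_left_mono powr_mono2) auto
      finally show ?thesis .
    qed (use phi0 S in \<open>auto simp: f\<close>)
    have hol1: "\<bar>f p - f q\<bar> \<le> K * dist p q powr r" if le: "dist q pj \<le> dist p pj" for p q
    proof (cases "dist q pj < 3*R/2")
      case False
      then show ?thesis using phi0[of p] phi0[of q] le K0 by (auto simp: f)
    next
      case True
      have "f p - f q = \<phi> p * (w p - w q) + (w q - w pj) * (\<phi> p - \<phi> q)" by (simp add: f algebra_simps)
      then have "\<bar>f p - f q\<bar> \<le> \<bar>w p - w q\<bar> + \<bar>w q - w pj\<bar> * \<bar>\<phi> p - \<phi> q\<bar>"
        using phi01[of p] by (auto simp: abs_mult intro!: order_trans[OF abs_triangle_ineq] add_mono mult_left_le_one_le)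
      also have "\<bar>w q - w pj\<bar> * \<bar>\<phi> p - \<phi> q\<bar> \<le> (C * (3*R/2) powr r) * (L * dist p q / (2*R)) powr r"
      proof (rule mult_mono)
        show "\<bar>w q - w pj\<bar> \<le> C * (3*R/2) powr r"
          using C(2)[of q pj] True C r by (smt (verit) dist_nz mult_left_mono powr_mono2 zero_le_dist)
        have "\<bar>\<phi> p - \<phi> q\<bar> \<le> L * \<bar>dist p pj / (2*R) - dist q pj / (2*R)\<bar>"
          unfolding \<phi>_def using R by (intro L) auto
        also have "\<dots> \<le> L * dist p q / (2*R)"
        proof -
          have "\<bar>dist p pj / (2*R) - dist q pj / (2*R)\<bar> = \<bar>dist p pj - dist q pj\<bar> / (2*R)"
            using R by (simp add: diff_divide_distrib[symmetric])
          also have "\<dots> \<le> dist p q / (2*R)" using R dist_triangle3[of p pj q] dist_triangle3[of q pj p]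
            by (intro divide_right_mono) (auto simp: dist_commute)
          finally show ?thesis using L(1) by (simp add: mult_left_mono times_divide_eq_right[symmetric] del: times_divide_eq_right)
        qed
        finally have a: "\<bar>\<phi> p - \<phi> q\<bar> \<le> L * dist p q / (2*R)" .
        have b: "\<bar>\<phi> p - \<phi> q\<bar> \<le> 1" using phi01[of p] phi01[of q] by auto
        have "\<bar>\<phi> p - \<phi> q\<bar> \<le> min 1 (L * dist p q / (2*R))" using a b by auto
        also have "\<dots> \<le> (L * dist p q / (2*R)) powr r" using L(1) R r by (intro min_powr) auto
        finally show "\<bar>\<phi> p - \<phi> q\<bar> \<le> (L * dist p q / (2*R)) powr r" .
      qed (use C in auto)
      also have "(C * (3*R/2) powr r) * (L * dist p q / (2*R)) powr r = C * (3*L/4) powr r * dist p q powr r"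
      proof -
        have "(3*R/2) powr r * (L * dist p q / (2*R)) powr r = ((3*R/2) * (L * dist p q / (2*R))) powr r"
          by (rule powr_mult[symmetric]; use R L in auto)
        also have "(3*R/2) * (L * dist p q / (2*R)) = (3*L/4) * dist p q" using R by (simp add: field_simps)
        also have "\<dots> powr r = (3*L/4) powr r * dist p q powr r" by (rule powr_mult; use L in auto)
        finally show ?thesis by (simp add: mult_ac)
      qed
      finally show ?thesis using C(2)[of p q] unfolding K_def by (simp add: algebra_simps)
    qed
    have hol: "\<bar>f p - f q\<bar> \<le> K * dist p q powr r" for p q
      using hol1[of q p] hol1[of p q] by (cases "dist q pj \<le> dist p pj") (auto simp: abs_minus_commute dist_commute)
    have "hoelder_norm \<alpha> f \<le> ereal (S + K powr (\<alpha>/r) * (2*S) powr (1 - \<alpha>/r))"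
      by (rule interp[OF al S(1) K0 sup hol])
    also have "\<dots> < ereal \<epsilon>" using eta(2)[OF S] by simp
    finally show "hoelder_norm \<alpha> (\<lambda>p. w_loc \<omega> w R pj p - w pj) < ereal \<epsilon>" unfolding f_def .
  qed
qed



lemma bc_hn: fixes w :: "'a::euclidean_space \<Rightarrow> real"
  assumes "BC_eucl r w" "0 < r" "r \<le> 1" shows "hoelder_norm r w < \<infinity>"
proof (cases "r < 1")
  case True then show ?thesis using assms by (simp add: BC_eucl_def)
next
  case False
  then have r1: "r = 1" using assms by auto
  then have "BC1 w" using assms by (simp add: BC_eucl_def)
  then obtain u' :: "'a \<Rightarrow> ('a \<Rightarrow>\<^sub>L real)" where d: "\<And>x. (w has_derivative blinfun_apply (u' x)) (at x)"
    and bu: "bounded (range u')" and bw: "bounded (range w)" unfolding BC1_def by blast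
  obtain B where B: "\<And>x. \<bar>w x\<bar> \<le> B" using bw unfolding bounded_iff by auto
  obtain M where M: "\<And>x. norm (u' x) \<le> M" using bu unfolding bounded_iff by auto
  have lip: "\<bar>w x - w y\<bar> \<le> max M 0 * dist x y" for x y
  proof -
    have "norm (w x - w y) \<le> M * norm (x - y)"
      by (rule differentiable_bound[of UNIV w "\<lambda>x. blinfun_apply (u' x)" M x y])
         (use d M in \<open>auto simp: norm_blinfun.rep_eq[symmetric]\<close>)
    also have "\<dots> \<le> max M 0 * norm (x - y)" by (intro mult_right_mono) auto
    finally show ?thesis by (simp add: dist_norm)
  qed
  have a: "sup_norm w \<le> ereal B" by (rule sup_norm_le) fact
  have b: "hoelder_seminorm 1 w \<le> ereal (max M 0)"
    by (rule seminorm_le) (use lip in \<open>auto simp: divide_le_eq\<close>)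
  have "hoelder_norm r w = sup_norm w + hoelder_seminorm 1 w" using r1 by (simp add: hoelder_norm_def)
  also have "\<dots> \<le> ereal B + ereal (max M 0)" by (rule add_mono[OF a b])
  also have "\<dots> = ereal (B + max M 0)" by (simp only: plus_ereal.simps)
  also have "\<dots> < \<infinity>" by simp
  finally show ?thesis .
qed

lemma far_part:
  fixes w :: "'a::real_normed_vector \<Rightarrow> real"
  assumes om: "cutoff_profile \<omega>" and r: "0 < r" "r \<le> 1" and hw: "hoelder_norm r w < \<infinity>"
    and al: "0 \<le> \<alpha>" "\<alpha> < r" and ep: "\<epsilon> > 0"
    and lim: "((\<lambda>Rt. sup_norm (\<lambda>p. if p \<in> ball 0 Rt then 0 else w p - winf)) \<longlongrightarrow> 0) at_top"
  shows "\<exists>Rh>0. \<forall>Rt>Rh. hoelder_norm \<alpha> (\<lambda>p. w_far \<omega> w winf Rt p - winf) < ereal \<epsilon>"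
proof -
  obtain B C where B: "\<And>p. \<bar>w p\<bar> \<le> B" and C: "C \<ge> 0" "\<And>p q. \<bar>w p - w q\<bar> \<le> C * dist p q powr r"
    using hn_bounds[OF hw r(1)] by metis
  obtain L where L: "L \<ge> 0" "\<And>s t. 0 \<le> s \<Longrightarrow> 0 \<le> t \<Longrightarrow> \<bar>\<omega> s - \<omega> t\<bar> \<le> L * \<bar>s - t\<bar>"
    using omega_lip[OF om] by metis
  have om01: "\<And>t. 0 \<le> \<omega> t \<and> \<omega> t \<le> 1" "\<And>t. t \<in> {0..1/2} \<Longrightarrow> \<omega> t = 1"
    using om unfolding cutoff_profile_def by auto
  define Bh where "Bh = B + \<bar>winf\<bar>"
  have Bh: "\<bar>w p - winf\<bar> \<le> Bh" for p using B[of p] by (simp add: Bh_def)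
  have Bh0: "Bh \<ge> 0" using Bh[of 0] by linarith
  define K where "K = C + Bh * (L/2) powr r"
  have K0: "K \<ge> 0" using C Bh0 by (simp add: K_def)
  obtain \<eta> where eta: "\<eta> > 0" "\<And>S. 0 \<le> S \<Longrightarrow> S < \<eta> \<Longrightarrow> S + K powr (\<alpha>/r) * (2*S) powr (1-\<alpha>/r) < \<epsilon>"
    using small[OF K0 _ _ ep, of "\<alpha>/r"] al r by auto
  have "\<forall>\<^sub>F Rt in at_top. sup_norm (\<lambda>p. if p \<in> ball 0 Rt then 0 else w p - winf) < ereal (\<eta>/2)"
    by (rule order_tendstoD(2)[OF lim]) (use eta in simp)
  then obtain N where N: "\<And>Rt. Rt \<ge> N \<Longrightarrow> sup_norm (\<lambda>p. if p \<in> ball 0 Rt then 0 else w p - winf) < ereal (\<eta>/2)"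
    unfolding eventually_at_top_linorder by auto
  show ?thesis
  proof (intro exI[of _ "max N 1"] conjI allI impI)
    fix Rt :: real assume Rt: "Rt > max N 1"
    define S where "S = \<eta>/2"
    have S: "0 \<le> S" "S < \<eta>" using eta by (auto simp: S_def)
    define \<psi> where "\<psi> p = 1 - \<omega> (dist p 0 / (2*Rt))" for p :: 'a
    define f where "f p = w_far \<omega> w winf Rt p - winf" for p :: 'a
    have f: "f p = \<psi> p * (w p - winf)" for p
      by (simp add: f_def \<psi>_def w_far_def algebra_simps)
    have psi01: "0 \<le> \<psi> p" "\<psi> p \<le> 1" for p using om01(1)[of "dist p 0 / (2*Rt)"] by (auto simp: \<psi>_def)
    have sup: "\<bar>f p\<bar> \<le> S" for p
    proof (cases "dist p 0 \<le> Rt")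
      case True
      then have "\<psi> p = 0" using om01(2)[of "dist p 0 / (2*Rt)"] Rt by (auto simp: \<psi>_def field_simps)
      then show ?thesis using S by (simp add: f)
    next
      case False
      then have "p \<notin> ball 0 Rt" by (simp add: dist_commute)
      then have "ereal \<bar>w p - winf\<bar> = ereal \<bar>(\<lambda>p. if p \<in> ball 0 Rt then 0 else w p - winf) p\<bar>" by simp
      also have "\<dots> \<le> sup_norm (\<lambda>p. if p \<in> ball 0 Rt then 0 else w p - winf)" by (rule sup_norm_ge)
      also have "\<dots> < ereal (\<eta>/2)" using N[of Rt] Rt by auto
      finally have "ereal \<bar>w p - winf\<bar> < ereal (\<eta>/2)" .
      then have "\<bar>w p - winf\<bar> \<le> S" by (simp add: S_def)
      then show ?thesis using psi01[of p]
        by (auto simp: f abs_mult intro: order_trans[OF mult_left_le_one_le])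
    qed
    have hol: "\<bar>f p - f q\<bar> \<le> K * dist p q powr r" for p q
    proof -
      have "f p - f q = \<psi> p * (w p - w q) + (w q - winf) * (\<psi> p - \<psi> q)" by (simp add: f algebra_simps)
      then have "\<bar>f p - f q\<bar> \<le> \<bar>w p - w q\<bar> + \<bar>w q - winf\<bar> * \<bar>\<psi> p - \<psi> q\<bar>"
        using psi01[of p] by (auto simp: abs_mult intro!: order_trans[OF abs_triangle_ineq] add_mono mult_left_le_one_le)
      also have "\<bar>w q - winf\<bar> * \<bar>\<psi> p - \<psi> q\<bar> \<le> Bh * (L * dist p q / 2) powr r"
      proof (rule mult_mono)
        have "\<bar>\<psi> p - \<psi> q\<bar> = \<bar>\<omega> (dist q 0 / (2*Rt)) - \<omega> (dist p 0 / (2*Rt))\<bar>"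
          by (simp add: \<psi>_def)
        also have "\<dots> \<le> L * \<bar>dist q 0 / (2*Rt) - dist p 0 / (2*Rt)\<bar>"
          using Rt by (intro L) auto
        also have "\<dots> \<le> L * dist p q / (2*Rt)"
        proof -
          have "\<bar>dist q 0 / (2*Rt) - dist p 0 / (2*Rt)\<bar> = \<bar>dist q 0 - dist p 0\<bar> / (2*Rt)"
            using Rt by (simp add: diff_divide_distrib[symmetric])
          also have "\<dots> \<le> dist p q / (2*Rt)" using Rt dist_triangle3[of p 0 q] dist_triangle3[of q 0 p]
            by (intro divide_right_mono) (auto simp: dist_commute)
          finally show ?thesis using L(1) by (simp add: mult_left_mono times_divide_eq_right[symmetric] del: times_divide_eq_right)
        qed
        finally have a: "\<bar>\<psi> p - \<psi> q\<bar> \<le> L * dist p q / (2*Rt)" .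
        have b: "\<bar>\<psi> p - \<psi> q\<bar> \<le> 1" using psi01[of p] psi01[of q] by auto
        have "\<bar>\<psi> p - \<psi> q\<bar> \<le> min 1 (L * dist p q / (2*Rt))" using a b by auto
        also have "\<dots> \<le> (L * dist p q / (2*Rt)) powr r" using L(1) Rt r by (intro min_powr) auto
        also have "\<dots> \<le> (L * dist p q / 2) powr r"
        proof (rule powr_mono2)
          show "L * dist p q / (2*Rt) \<le> L * dist p q / 2"
            using Rt L(1) by (intro divide_left_mono) auto
        qed (use L(1) Rt r in auto)
        finally show "\<bar>\<psi> p - \<psi> q\<bar> \<le> (L * dist p q / 2) powr r" .
      qed (use Bh Bh0 in auto)
      also have "(L * dist p q / 2) powr r = (L/2) powr r * dist p q powr r"
      proof -
        have "(L * dist p q / 2) powr r = ((L/2) * dist p q) powr r" by simp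
        also have "((L/2) * dist p q) powr r = (L/2) powr r * dist p q powr r"
          by (rule powr_mult; use L(1) in auto)
        finally show ?thesis .
      qed
      finally show ?thesis using C(2)[of p q] unfolding K_def by (simp add: algebra_simps)
    qed
    have "hoelder_norm \<alpha> f \<le> ereal (S + K powr (\<alpha>/r) * (2*S) powr (1 - \<alpha>/r))"
      by (rule interp[OF al S(1) K0 sup hol])
    also have "\<dots> < ereal \<epsilon>" using eta(2)[OF S] by simp
    finally show "hoelder_norm \<alpha> (\<lambda>p. w_far \<omega> w winf Rt p - winf) < ereal \<epsilon>" unfolding f_def .
  qed auto
qed

lemma loc_part':
  fixes w :: "'m::metric_space \<Rightarrow> real"
  assumes om: "cutoff_profile \<omega>" and "0 < r" "r \<le> 1" "hoelder_norm r w < \<infinity>" "0 \<le> \<alpha>" "\<alpha> < r" "\<epsilon> > 0"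
  shows "\<exists>R0>0. \<forall>R\<in>{0<..<R0}. \<forall>(N::nat) (ps :: nat \<Rightarrow> 'm).
          \<forall>j\<in>{1..N}. hoelder_norm \<alpha> (\<lambda>p. w_loc \<omega> w R (ps j) p - w (ps j)) < ereal \<epsilon>"
proof -
  obtain R0 where "R0 > 0" "\<forall>R\<in>{0<..<R0}. \<forall>pj::'m. hoelder_norm \<alpha> (\<lambda>p. w_loc \<omega> w R pj p - w pj) < ereal \<epsilon>"
    using loc_part[OF assms] by blast
  then show ?thesis by blast
qed

theorem lemma5p1:
  fixes \<omega> :: "real \<Rightarrow> real"
  assumes om: "cutoff_profile \<omega>"
  shows
   "(\<forall>(w :: 'm::metric_space \<Rightarrow> real) r.
       compact (UNIV :: 'm set) \<and> r \<in> {0<..1} \<and> hoelder_norm r w < \<infinity> \<longrightarrow>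
       (\<forall>\<alpha> \<in> {0..<r}. \<forall>\<epsilon>>0. \<exists>R0>0. \<forall>R\<in>{0<..<R0}. \<forall>(N::nat) (ps :: nat \<Rightarrow> 'm).
          \<forall>j\<in>{1..N}. hoelder_norm \<alpha> (\<lambda>p. w_loc \<omega> w R (ps j) p - w (ps j)) < ereal \<epsilon>))
  \<and> (\<forall>(w :: 'a::euclidean_space \<Rightarrow> real) r winf.
       r \<in> {0<..1} \<and> BC_eucl r w \<and> winf > 0 \<and>
       ((\<lambda>Rt. sup_norm (\<lambda>p. if p \<in> ball 0 Rt then 0 else w p - winf)) \<longlongrightarrow> 0) at_top \<longrightarrow>
       (\<forall>\<alpha> \<in> {0..<r}. \<forall>\<epsilon>>0.
          (\<exists>R0>0. \<forall>R\<in>{0<..<R0}. \<forall>(N::nat) (ps :: nat \<Rightarrow> 'a).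
             \<forall>j\<in>{1..N}. hoelder_norm \<alpha> (\<lambda>p. w_loc \<omega> w R (ps j) p - w (ps j)) < ereal \<epsilon>)
          \<and> (\<exists>Rh>0. \<forall>Rt>Rh. hoelder_norm \<alpha> (\<lambda>p. w_far \<omega> w winf Rt p - winf) < ereal \<epsilon>)))"
proof (intro conjI)
  show "\<forall>(w :: 'm::metric_space \<Rightarrow> real) r.
       compact (UNIV :: 'm set) \<and> r \<in> {0<..1} \<and> hoelder_norm r w < \<infinity> \<longrightarrow>
       (\<forall>\<alpha> \<in> {0..<r}. \<forall>\<epsilon>>0. \<exists>R0>0. \<forall>R\<in>{0<..<R0}. \<forall>(N::nat) (ps :: nat \<Rightarrow> 'm).
          \<forall>j\<in>{1..N}. hoelder_norm \<alpha> (\<lambda>p. w_loc \<omega> w R (ps j) p - w (ps j)) < ereal \<epsilon>)"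
  proof (intro allI impI ballI)
    fix w :: "'m \<Rightarrow> real" and r \<alpha> \<epsilon> :: real
    assume H: "compact (UNIV :: 'm set) \<and> r \<in> {0<..1} \<and> hoelder_norm r w < \<infinity>"
      and a: "\<alpha> \<in> {0..<r}" and e: "\<epsilon> > 0"
    show "\<exists>R0>0. \<forall>R\<in>{0<..<R0}. \<forall>(N::nat) (ps :: nat \<Rightarrow> 'm).
          \<forall>j\<in>{1..N}. hoelder_norm \<alpha> (\<lambda>p. w_loc \<omega> w R (ps j) p - w (ps j)) < ereal \<epsilon>"
      by (rule loc_part'[OF om, of r w \<alpha> \<epsilon>]) (use H a e in auto)
  qed
next
  show "\<forall>(w :: 'a::euclidean_space \<Rightarrow> real) r winf.
       r \<in> {0<..1} \<and> BC_eucl r w \<and> winf > 0 \<and>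
       ((\<lambda>Rt. sup_norm (\<lambda>p. if p \<in> ball 0 Rt then 0 else w p - winf)) \<longlongrightarrow> 0) at_top \<longrightarrow>
       (\<forall>\<alpha> \<in> {0..<r}. \<forall>\<epsilon>>0.
          (\<exists>R0>0. \<forall>R\<in>{0<..<R0}. \<forall>(N::nat) (ps :: nat \<Rightarrow> 'a).
             \<forall>j\<in>{1..N}. hoelder_norm \<alpha> (\<lambda>p. w_loc \<omega> w R (ps j) p - w (ps j)) < ereal \<epsilon>)
          \<and> (\<exists>Rh>0. \<forall>Rt>Rh. hoelder_norm \<alpha> (\<lambda>p. w_far \<omega> w winf Rt p - winf) < ereal \<epsilon>))"
  proof (intro allI impI ballI)
    fix w :: "'a \<Rightarrow> real" and r winf \<alpha> \<epsilon> :: real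
    assume H: "r \<in> {0<..1} \<and> BC_eucl r w \<and> winf > 0 \<and>
       ((\<lambda>Rt. sup_norm (\<lambda>p. if p \<in> ball 0 Rt then 0 else w p - winf)) \<longlongrightarrow> 0) at_top"
      and a: "\<alpha> \<in> {0..<r}" and e: "\<epsilon> > 0"
    have r: "0 < r" "r \<le> 1" using H by auto
    have hw: "hoelder_norm r w < \<infinity>" using bc_hn[of r w] H by auto
    have lim: "((\<lambda>Rt. sup_norm (\<lambda>p. if p \<in> ball 0 Rt then 0 else w p - winf)) \<longlongrightarrow> 0) at_top"
      using H by blast
    have al: "0 \<le> \<alpha>" "\<alpha> < r" using a by auto
    show "(\<exists>R0>0. \<forall>R\<in>{0<..<R0}. \<forall>(N::nat) (ps :: nat \<Rightarrow> 'a).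
             \<forall>j\<in>{1..N}. hoelder_norm \<alpha> (\<lambda>p. w_loc \<omega> w R (ps j) p - w (ps j)) < ereal \<epsilon>)
          \<and> (\<exists>Rh>0. \<forall>Rt>Rh. hoelder_norm \<alpha> (\<lambda>p. w_far \<omega> w winf Rt p - winf) < ereal \<epsilon>)"
    proof
      show "\<exists>R0>0. \<forall>R\<in>{0<..<R0}. \<forall>(N::nat) (ps :: nat \<Rightarrow> 'a).
             \<forall>j\<in>{1..N}. hoelder_norm \<alpha> (\<lambda>p. w_loc \<omega> w R (ps j) p - w (ps j)) < ereal \<epsilon>"
        by (rule loc_part'[OF om r hw al e])
      show "\<exists>Rh>0. \<forall>Rt>Rh. hoelder_norm \<alpha> (\<lambda>p. w_far \<omega> w winf Rt p - winf) < ereal \<epsilon>"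
        by (rule far_part[OF om r hw al e lim])
    qed
  qed
qed

end
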